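(* Let $C_1$ be a binary singly-even self-dual $(n,k,d)$-code and $C_2$ a binary doubly-even self-dual code of length $n$. Suppose $C_1$ and $C_2$ are neighbors, and let $C_{k-1}=C_1\cap C_2$ (their common maximal doubly-even subcode). Then every codeword $c\in C_{k-1}^{\perp}$ of weight $w(c)\equiv 2\pmod 4$ satisfies $d\le w(c)\le n-d$.
   Context: Codes are binary linear codes in $\mathbb{F}_2^n$ with the standard inner product $\sum_i x_iy_i\in\mathbb{F}_2$; $D^\perp$ denotes the dual code of $D$, and $C$ is self-dual if $C=C^\perp$ (then $k=n/2$). An $(n,k,d)$-code has length $n$, dimension $k$, minimum distance $d$. The weight $w(x)$ is the number of nonzero coordinates. A self-dual code is singly-even if it contains a codeword of weight $\equiv 2\pmod 4$, and doubly-even if all codewords have weight divisible by $4$. Two self-dual codes of length $n$ are neighbors if their intersection has dimension $n/2-1$. *)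

theory Defs
  imports Main "HOL.Vector_Spaces" "HOL-Library.Z2" "HOL-Library.Function_Algebras"
begin

text \<open>Words of length n over F_2 are functions from a finite index type 'n
  (with CARD('n) = n) to the two-element field bit; addition and zero are
  pointwise (Function_Algebras).\<close>

definition scaleF2 :: "bit \<Rightarrow> ('n \<Rightarrow> bit) \<Rightarrow> ('n \<Rightarrow> bit)" where
  "scaleF2 c x = (\<lambda>i. c * x i)"

definition ip :: "('n::finite \<Rightarrow> bit) \<Rightarrow> ('n \<Rightarrow> bit) \<Rightarrow> bit" where
  "ip x y = (\<Sum>i\<in>UNIV. x i * y i)"

definition wt :: "('n::finite \<Rightarrow> bit) \<Rightarrow> nat" where
  "wt x = card {i. x i \<noteq> 0}"

definition linear_code :: "('n::finite \<Rightarrow> bit) set \<Rightarrow> bool" where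
  "linear_code C \<longleftrightarrow> module.subspace scaleF2 C"

definition code_dim :: "('n::finite \<Rightarrow> bit) set \<Rightarrow> nat" where
  "code_dim C = vector_space.dim scaleF2 C"

definition dual :: "('n::finite \<Rightarrow> bit) set \<Rightarrow> ('n \<Rightarrow> bit) set" where
  "dual D = {x. \<forall>y\<in>D. ip x y = 0}"

definition self_dual :: "('n::finite \<Rightarrow> bit) set \<Rightarrow> bool" where
  "self_dual C \<longleftrightarrow> linear_code C \<and> C = dual C"

definition min_dist :: "('n::finite \<Rightarrow> bit) set \<Rightarrow> nat" where
  "min_dist C = Min {wt x | x. x \<in> C \<and> x \<noteq> 0}"

definition singly_even :: "('n::finite \<Rightarrow> bit) set \<Rightarrow> bool" where
  "singly_even C \<longleftrightarrow> self_dual C \<and> (\<exists>x\<in>C. wt x mod 4 = 2)"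

definition doubly_even :: "('n::finite \<Rightarrow> bit) set \<Rightarrow> bool" where
  "doubly_even C \<longleftrightarrow> (\<forall>x\<in>C. wt x mod 4 = 0)"

definition neighbors :: "('n::finite \<Rightarrow> bit) set \<Rightarrow> ('n \<Rightarrow> bit) set \<Rightarrow> bool" where
  "neighbors C1 C2 \<longleftrightarrow> self_dual C1 \<and> self_dual C2 \<and>
     code_dim (C1 \<inter> C2) = card (UNIV :: 'n set) div 2 - 1"

end

theory Submission
  imports Defs "HOL-Library.Cardinality"
begin

lemma bit_UNIV: "(UNIV :: bit set) = {0, 1}"
  by (auto intro: bit.exhaust)

instance bit :: finite
  by standard (simp add: bit_UNIV)

lemma card_bit: "CARD(bit) = 2"
  by (simp add: bit_UNIV)

lemma card_words: "CARD('n::finite \<Rightarrow> bit) = 2 ^ CARD('n)"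
  by (simp add: card_fun card_bit)

lemma bit_add_self [simp]: "(x::bit) + x = 0"
  by (cases x) simp_all

lemma fun_add_self [simp]: "(x::'n \<Rightarrow> bit) + x = 0"
  by (simp add: fun_eq_iff)

interpretation F: vector_space scaleF2
  by standard (auto simp: scaleF2_def fun_eq_iff algebra_simps)

lemma scaleF2_bit: "scaleF2 c v = (if c = 0 then 0 else v)"
  by (cases c) (auto simp: scaleF2_def fun_eq_iff)

lemma of_nat_bit: "(of_nat k :: bit) = (if even k then 0 else 1)"
  by (induction k) auto

lemma ip_add_left: "ip (x + y) z = ip x z + ip y z"
  unfolding ip_def plus_fun_def by (simp add: distrib_right distrib_left sum.distrib del: add_bit_eq_xor mult_bit_eq_and)

lemma ip_add_right: "ip z (x + y) = ip z x + ip z y"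
  unfolding ip_def plus_fun_def by (simp add: distrib_right distrib_left sum.distrib del: add_bit_eq_xor mult_bit_eq_and)

lemma ip_comm: "ip x y = ip y x"
  unfolding ip_def by (simp add: mult.commute del: add_bit_eq_xor mult_bit_eq_and)

lemma ip_zero_right [simp]: "ip x 0 = 0"
  by (simp add: ip_def)

lemma ip_card: "ip x y = of_nat (card {i. x i \<noteq> 0 \<and> y i \<noteq> 0})"
proof -
  have "ip x y = (\<Sum>i\<in>UNIV. if x i \<noteq> 0 \<and> y i \<noteq> 0 then 1 else 0)"
    unfolding ip_def by (rule sum.cong) auto
  also have "\<dots> = of_nat (card {i. x i \<noteq> 0 \<and> y i \<noteq> 0})"
    by (simp add: sum.If_cases)
  finally show ?thesis .
qed

lemma wt_add: "wt (x + y) + 2 * card {i. x i \<noteq> 0 \<and> y i \<noteq> 0} = wt x + wt y"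
proof -
  define A where "A = {i. x i \<noteq> 0}"
  define B where "B = {i. y i \<noteq> 0}"
  have e: "{i. (x + y) i \<noteq> 0} = (A - B) \<union> (B - A)"
    by (auto simp: A_def B_def)
  have "card ((A - B) \<union> (B - A)) = card (A - B) + card (B - A)"
    by (rule card_Un_disjoint) auto
  moreover have "card A = card (A - B) + card (A \<inter> B)"
    by (metis Diff_Int_distrib2 Diff_disjoint Int_absorb Int_commute Un_Diff_Int card_Un_disjoint finite)
  moreover have "card B = card (B - A) + card (A \<inter> B)"
    by (metis Int_commute Un_Diff_Int card_Un_disjoint Diff_disjoint Diff_Int_distrib2 Int_absorb finite inf_commute)
  moreover have "{i. x i \<noteq> 0 \<and> y i \<noteq> 0} = A \<inter> B" by (auto simp: A_def B_def)
  ultimately show ?thesis unfolding wt_def e A_def[symmetric] B_def[symmetric] by simp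
qed

lemma wt_add_mod4:
  "wt (x + y) mod 4 = (wt x + wt y + (if ip x y = 0 then 0 else 2)) mod 4"
proof -
  define m where "m = card {i. x i \<noteq> 0 \<and> y i \<noteq> 0}"
  have h: "wt (x + y) + 2 * m = wt x + wt y" using wt_add m_def by simp
  have p: "ip x y = (if even m then 0 else 1)" unfolding m_def ip_card of_nat_bit by (rule refl)
  show ?thesis
  proof (cases "even m")
    case True
    then obtain q where q: "m = 2 * q" by blast
    have "ip x y = 0" using p True by simp
    moreover have "wt x + wt y = wt (x + y) + 4 * q" using h q by simp
    ultimately show ?thesis by simp
  next
    case False
    then obtain q where q: "m = 2 * q + 1" using oddE by blast
    have "ip x y \<noteq> 0" using p False by simp
    moreover have "wt x + wt y + 2 = wt (x + y) + 4 * (q + 1)" using h q by simp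
    ultimately show ?thesis by (simp add: mod_add_right_eq)
  qed
qed

lemma sum_neg_inv_zero:
  assumes "finite A" "bij_betw g A A" "\<And>a. a \<in> A \<Longrightarrow> f (g a) = - f a"
  shows "sum f A = (0::int)"
proof -
  have "sum f A = sum (\<lambda>a. f (g a)) A"
    using sum.reindex_bij_betw[OF assms(2), of f] by simp
  also have "\<dots> = - sum f A" using assms(3) by (simp add: sum_negf)
  finally show ?thesis by simp
qed

lemma invol_bij: "(\<And>x. g (g x) = x) \<Longrightarrow> (\<And>x. x \<in> A \<Longrightarrow> g x \<in> A) \<Longrightarrow> bij_betw g A A"
  by (rule bij_betw_byWitness[where f'=g]) auto

definition chi :: "('n::finite \<Rightarrow> bit) \<Rightarrow> ('n \<Rightarrow> bit) \<Rightarrow> int" where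
  "chi x v = (if ip x v = 0 then 1 else -1)"

lemma chi_flip: "ip x w \<noteq> 0 \<Longrightarrow> chi x (v + w) = - chi x v"
  by (cases "ip x v"; cases "ip x w") (auto simp: chi_def ip_add_right)

lemma chi_flip_left: "ip w v \<noteq> 0 \<Longrightarrow> chi (x + w) v = - chi x v"
  by (cases "ip x v"; cases "ip w v") (auto simp: chi_def ip_add_left)

lemma count_dual:
  fixes D :: "('n::finite \<Rightarrow> bit) set"
  assumes "0 \<in> D" "\<And>x y. x \<in> D \<Longrightarrow> y \<in> D \<Longrightarrow> x + y \<in> D"
  shows "card D * card (dual D) = 2 ^ CARD('n)"
proof -
  define S where "S = (\<Sum>v\<in>D. \<Sum>x\<in>UNIV. chi x v)"
  have inner1: "(\<Sum>x\<in>UNIV. chi x v) = (if v = 0 then 2 ^ CARD('n) else 0)" for v :: "'n \<Rightarrow> bit"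
  proof (cases "v = 0")
    case True
    then show ?thesis by (simp add: chi_def card_words)
  next
    case False
    then obtain i where i: "v i \<noteq> 0" by (auto simp: fun_eq_iff)
    define e where "e = (\<lambda>j. if j = i then (1::bit) else 0)"
    have ev: "ip e v \<noteq> 0"
    proof -
      have "ip e v = (\<Sum>j\<in>UNIV. if j = i then v i else 0)"
        unfolding ip_def e_def by (rule sum.cong) auto
      then show ?thesis using i by simp
    qed
    have "(\<Sum>x\<in>UNIV. chi x v) = 0"
      by (rule sum_neg_inv_zero[where g="\<lambda>x. x + e"])
         (auto intro!: invol_bij simp: add.assoc chi_flip_left[OF ev])
    then show ?thesis using False by simp
  qed
  have "S = (\<Sum>v\<in>D. if v = 0 then 2 ^ CARD('n) else 0)"
    unfolding S_def using inner1 by simp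
  also have "\<dots> = 2 ^ CARD('n)" using assms(1) by (simp add: sum.delta)
  finally have S1: "S = 2 ^ CARD('n)" .
  have inner2: "(\<Sum>v\<in>D. chi x v) = (if x \<in> dual D then int (card D) else 0)" for x :: "'n \<Rightarrow> bit"
  proof (cases "x \<in> dual D")
    case True
    then have "\<forall>v\<in>D. chi x v = 1" by (auto simp: dual_def chi_def)
    then show ?thesis using True by simp
  next
    case False
    then obtain w where w: "w \<in> D" "ip x w \<noteq> 0" by (auto simp: dual_def)
    have "(\<Sum>v\<in>D. chi x v) = 0"
      by (rule sum_neg_inv_zero[where g="\<lambda>v. v + w"])
         (auto intro!: invol_bij simp: add.assoc chi_flip[OF w(2)] assms(2) w(1))
    then show ?thesis using False by simp
  qed
  have "S = (\<Sum>x\<in>UNIV. \<Sum>v\<in>D. chi x v)" unfolding S_def by (rule sum.swap)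
  also have "\<dots> = (\<Sum>x\<in>UNIV. if x \<in> dual D then int (card D) else 0)"
    using inner2 by simp
  also have "\<dots> = int (card D) * int (card (dual D))"
    by (simp add: sum.If_cases)
  finally have "int (card D * card (dual D)) = 2 ^ CARD('n)" using S1 by simp
  then show ?thesis by (metis of_nat_eq_of_nat_power_cancel_iff of_nat_numeral)
qed

lemma card_span_indep:
  fixes B :: "('n::finite \<Rightarrow> bit) set"
  assumes "F.independent B"
  shows "card (F.span B) = 2 ^ card B"
proof -
  have fB: "finite B" by simp
  define \<sigma> :: "('n \<Rightarrow> bit) set \<Rightarrow> ('n \<Rightarrow> bit)" where "\<sigma> = (\<lambda>S. \<Sum>v\<in>S. v)"
  have rw: "(\<Sum>v\<in>B. scaleF2 (u v) v) = \<sigma> {v\<in>B. u v \<noteq> 0}" for u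
    unfolding \<sigma>_def by (simp add: sum.inter_filter scaleF2_bit) (rule sum.cong, auto)
  have "F.span B = range (\<lambda>u. \<Sum>v\<in>B. scaleF2 (u v) v)" by (rule F.span_finite[OF fB])
  also have "\<dots> = \<sigma> ` Pow B"
  proof
    show "range (\<lambda>u. \<Sum>v\<in>B. scaleF2 (u v) v) \<subseteq> \<sigma> ` Pow B"
      unfolding rw by auto
    show "\<sigma> ` Pow B \<subseteq> range (\<lambda>u. \<Sum>v\<in>B. scaleF2 (u v) v)"
    proof
      fix y assume "y \<in> \<sigma> ` Pow B"
      then obtain S where S: "S \<subseteq> B" "y = \<sigma> S" by auto
      have "{v\<in>B. (if v \<in> S then (1::bit) else 0) \<noteq> 0} = S" using S by auto
      then have "y = (\<Sum>v\<in>B. scaleF2 (if v \<in> S then 1 else 0) v)" unfolding rw S by simp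
      then show "y \<in> range (\<lambda>u. \<Sum>v\<in>B. scaleF2 (u v) v)"
        by (rule image_eqI[where x="\<lambda>v. if v \<in> S then 1 else 0"]) simp
    qed
  qed
  finally have sp: "F.span B = \<sigma> ` Pow B" .
  have inj: "inj_on \<sigma> (Pow B)"
  proof
    fix S T assume S: "S \<in> Pow B" and T: "T \<in> Pow B" and eq: "\<sigma> S = \<sigma> T"
    define c where "c = (\<lambda>v. (if v \<in> S then 1 else 0) + (if v \<in> T then 1 else (0::bit)))"
    have sc: "scaleF2 (c v) v = (if v \<in> S then v else 0) + (if v \<in> T then v else 0)" for v
      by (cases "v \<in> S"; cases "v \<in> T") (auto simp: c_def scaleF2_bit)
    have "(\<Sum>v\<in>B. scaleF2 (c v) v) = (\<Sum>v\<in>B. if v \<in> S then v else 0) + (\<Sum>v\<in>B. if v \<in> T then v else 0)"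
      unfolding sc by (rule sum.distrib)
    also have "\<dots> = \<sigma> S + \<sigma> T"
      proof -
      have "{v \<in> B. v \<in> S} = S" "{v \<in> B. v \<in> T} = T" using S T by auto
      then show ?thesis unfolding \<sigma>_def by (simp add: sum.inter_filter[symmetric])
    qed
    also have "\<dots> = 0" using eq by simp
    finally have "\<forall>v\<in>B. c v = 0" using F.independentD[OF assms fB order_refl] by blast
    then show "S = T" using S T by (auto simp: c_def split: if_splits)
  qed
  have "card (F.span B) = card (Pow B)" unfolding sp by (rule card_image[OF inj])
  then show ?thesis by (simp add: card_Pow)
qed

lemma card_code:
  fixes D :: "('n::finite \<Rightarrow> bit) set"
  assumes "linear_code D"
  shows "card D = 2 ^ code_dim D"
proof -
  have sub: "F.subspace D" using assms by (simp add: linear_code_def)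
  obtain B where B: "B \<subseteq> D" "F.independent B" "D \<subseteq> F.span B" "card B = F.dim D"
    by (rule F.basis_exists)
  have "F.span B = D" by (rule F.span_subspace[OF B(1) B(3) sub])
  then show ?thesis using card_span_indep[OF B(2)] B(4) by (simp add: code_dim_def)
qed

lemma char2_swap: "(a::'n\<Rightarrow>bit) + u = b + v \<Longrightarrow> a + b = u + v"
proof -
  assume h: "a + u = b + v"
  have "a i + b i = u i + v i" for i
  proof -
    have "a i + u i = b i + v i" using h by (metis plus_fun_apply)
    then show ?thesis by (cases "a i"; cases "b i"; cases "u i"; cases "v i") auto
  qed
  then show ?thesis by (simp add: fun_eq_iff del: add_bit_eq_xor)
qed

lemma add_cancel2: "(x::'n\<Rightarrow>bit) + (x + y) = y"
  by (simp add: add.assoc[symmetric])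

lemma add_cancel3: "(y::'n\<Rightarrow>bit) + (x + y) = x"
  by (metis add_cancel2 add.commute)

lemma mod4_aux: "(a::nat) mod 4 = 2 \<Longrightarrow> b mod 4 = 0 \<Longrightarrow> (a + b + 2) mod 4 = 0"
  by presburger

lemma lc_zero: "linear_code C \<Longrightarrow> 0 \<in> C"
  unfolding linear_code_def by (rule F.subspace_0)

lemma lc_add: "linear_code C \<Longrightarrow> x \<in> C \<Longrightarrow> y \<in> C \<Longrightarrow> x + y \<in> C"
  unfolding linear_code_def by (rule F.subspace_add)

lemma lc_inter: "linear_code C \<Longrightarrow> linear_code D \<Longrightarrow> linear_code (C \<inter> D)"
  unfolding linear_code_def by (rule F.subspace_inter)

lemma ip_self: "ip x x = ip (\<lambda>i. 1) x"
proof -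
  have h: "x i * x i = 1 * x i" for i by (cases "x i") simp_all
  show ?thesis unfolding ip_def by (rule sum.cong[OF refl]) (rule h)
qed

lemma ones_in: "self_dual C \<Longrightarrow> (\<lambda>i. 1) \<in> C"
proof -
  assume "self_dual C"
  then have e: "C = dual C" by (simp add: self_dual_def)
  have "ip (\<lambda>i. 1) y = 0" if "y \<in> C" for y
  proof -
    have "y \<in> dual C" using that e by simp
    then have "ip y y = 0" using that by (simp add: dual_def)
    then show ?thesis by (simp add: ip_self)
  qed
  then have "(\<lambda>i. 1) \<in> dual C" by (simp add: dual_def)
  then show ?thesis using e by simp
qed

lemma wt_ones_add: "wt (c + (\<lambda>i. 1)) = CARD('n::finite) - wt (c::'n \<Rightarrow> bit)"
proof -
  have "{i. (c + (\<lambda>i. 1)) i \<noteq> 0} = - {i. c i \<noteq> 0}"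
    by auto
  then show ?thesis unfolding wt_def by (simp add: Compl_eq_Diff_UNIV card_Diff_subset)
qed

lemma wt_zero: "wt (0 :: 'n::finite \<Rightarrow> bit) = 0"
  by (simp add: wt_def)

lemma wt_ones: "wt (\<lambda>i::'n::finite. (1::bit)) = CARD('n)"
  by (simp add: wt_def)

lemma card_coset: "card ((\<lambda>w. a + w) ` C) = card (C :: ('n::finite \<Rightarrow> bit) set)"
  by (rule card_image) (auto simp: inj_on_def)

lemma dual_add: "x \<in> dual D \<Longrightarrow> y \<in> dual D \<Longrightarrow> x + y \<in> dual D"
  by (auto simp: dual_def ip_add_left)

lemma dual_anti: "C \<subseteq> D \<Longrightarrow> dual D \<subseteq> dual C"
  by (auto simp: dual_def)

theorem mainTheorem5:
  fixes C1 C2 :: "('n::finite \<Rightarrow> bit) set" and n k d :: nat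
  assumes "n = card (UNIV :: 'n set)"
    and "self_dual C1" and "singly_even C1"
    and "code_dim C1 = k" and "min_dist C1 = d"
    and "self_dual C2" and "doubly_even C2"
    and "neighbors C1 C2"
  shows "\<forall>c\<in>dual (C1 \<inter> C2). wt c mod 4 = 2 \<longrightarrow> d \<le> wt c \<and> wt c \<le> n - d"
proof -
  define C0 where "C0 = C1 \<inter> C2"
  define T where "T = (\<lambda>a. (\<lambda>w. a + w) ` C0)"
  have l1: "linear_code C1" and e1: "C1 = dual C1" using assms(2) by (auto simp: self_dual_def)
  have l2: "linear_code C2" and e2: "C2 = dual C2" using assms(6) by (auto simp: self_dual_def)
  have l0: "linear_code C0" unfolding C0_def using l1 l2 by (rule lc_inter)
  have de: "\<And>x. x \<in> C2 \<Longrightarrow> wt x mod 4 = 0" using assms(7) by (simp add: doubly_even_def)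
  obtain x1 where x1: "x1 \<in> C1" "wt x1 mod 4 = 2" using assms(3) by (auto simp: singly_even_def)
  have fin: "finite (A :: ('n \<Rightarrow> bit) set)" for A by simp
  have cU: "card C1 * card C1 = 2 ^ n" using count_dual[of C1] lc_zero[OF l1] lc_add[OF l1] e1 assms(1)
    by simp
  have "card C1 = 2 ^ k" using card_code[OF l1] assms(4) by simp
  then have "2 ^ (2 * k) = (2::nat) ^ n" using cU by (simp add: power_mult power2_eq_square mult_2 power_add)
  then have nk: "n = 2 * k" by simp
  have cC1: "card C1 = 2 ^ k" by fact
  have cU2: "card C2 * card C2 = 2 ^ n" using count_dual[of C2] lc_zero[OF l2] lc_add[OF l2] e2 assms(1)
    by simp
  have "card C2 = 2 ^ code_dim C2" using card_code[OF l2] .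
  then have "2 ^ (2 * code_dim C2) = (2::nat) ^ n" using cU2 by (simp add: power_mult power2_eq_square mult_2 power_add)
  then have "code_dim C2 = k" using nk by simp
  then have cC2: "card C2 = 2 ^ k" using card_code[OF l2] by simp
  have cC0: "card C0 = 2 ^ (k - 1)" using card_code[OF l0] assms(8) nk assms(1)
    by (simp add: neighbors_def C0_def)
  have x1C2: "x1 \<notin> C2" using x1 de by force
  have "x1 \<noteq> 0" using x1 by (auto simp: wt_zero)
  then have "card {0, x1} \<le> card C1" using x1 lc_zero[OF l1] by (intro card_mono) auto
  then have "k \<ge> 1" using cC1 \<open>x1 \<noteq> 0\<close> by (cases k) auto
  then have k2: "card C1 = 2 * card C0" "card C2 = 2 * card C0"
    using cC0 cC1 cC2 by (metis Suc_diff_le diff_Suc_1 power_Suc)+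
  have cD: "card C0 * card (dual C0) = 2 ^ n"
    using count_dual[of C0] lc_zero[OF l0] lc_add[OF l0] assms(1) by simp
  have "card C0 > 0" using lc_zero[OF l0] card_gt_0_iff[of C0] by auto
  have cD4: "card (dual C0) = 4 * card C0"
  proof -
    have "card C0 * card (dual C0) = card C0 * (4 * card C0)"
      using cD cU k2(1) by (simp add: algebra_simps)
    then show ?thesis using \<open>card C0 > 0\<close> by auto
  qed
  have C0sub: "C0 \<subseteq> C1" "C0 \<subseteq> C2" by (auto simp: C0_def)
  have cT: "card (T a) = card C0" for a unfolding T_def by (rule card_coset)
  have Tmem: "a + w \<in> T a" if "w \<in> C0" for a w using that unfolding T_def by blast
  have Tdisj: "T a \<inter> T b = {}" if "a + b \<notin> C0" for a b
  proof (rule ccontr)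
    assume "T a \<inter> T b \<noteq> {}"
    then obtain u v where uv: "u \<in> C0" "v \<in> C0" "a + u = b + v" unfolding T_def by auto
    have "a + b = u + v" using uv(3) by (rule char2_swap)
    then show False using that lc_add[OF l0 uv(1) uv(2)] by simp
  qed
  have T0: "T 0 = C0" unfolding T_def by simp
  obtain y1 where y1: "y1 \<in> C2" "y1 \<notin> C0"
  proof -
    have "\<not> C2 \<subseteq> C0" using k2(2) \<open>card C0 > 0\<close> card_mono[OF fin, of C2 C0] by auto
    then show ?thesis using that by blast
  qed
  have TsubC2: "T y1 \<subseteq> C2" using lc_add[OF l2 y1(1)] C0sub unfolding T_def by blast
  have C2eq: "C2 = C0 \<union> T y1"
  proof -
    have "T 0 \<inter> T y1 = {}" by (rule Tdisj) (simp add: y1)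
    then have "card (C0 \<union> T y1) = card C2" using T0 cT[of y1] k2(2)
      by (simp add: card_Un_disjoint)
    moreover have "C0 \<union> T y1 \<subseteq> C2" using TsubC2 C0sub by blast
    ultimately show ?thesis using card_subset_eq[OF fin] by metis
  qed
  have ipC0: "ip a w = 0" if "a \<in> C1" "w \<in> C0" for a w
    using that C0sub e1 by (auto simp: dual_def)
  have ipC0': "ip a w = 0" if "a \<in> C2" "w \<in> C0" for a w
    using that C0sub e2 by (auto simp: dual_def)
  have ipxy: "ip x1 y1 \<noteq> 0"
  proof -
    have "\<not> (\<forall>y\<in>C2. ip x1 y = 0)" using x1C2 e2 unfolding dual_def by blast
    then obtain z where z: "z \<in> C2" "ip x1 z \<noteq> 0" by blast
    have "z \<notin> C0" using z ipC0 x1(1) by blast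
    then obtain w where w: "w \<in> C0" "z = y1 + w" using z C2eq unfolding T_def by blast
    then show ?thesis using z ipC0[OF x1(1) w(1)] by (simp add: ip_add_right)
  qed
  have x1C0: "x1 \<notin> C0" using x1C2 C0sub by blast
  have xyC0: "x1 + y1 \<notin> C0"
  proof
    assume "x1 + y1 \<in> C0"
    then have "x1 + (x1 + y1) \<in> C1" using lc_add[OF l1 x1(1)] C0sub by blast
    then have "y1 \<in> C1" by (simp add: add_cancel2)
    then show False using y1 by (simp add: C0_def)
  qed
  have inD: "a \<in> dual C0" if "a \<in> C1 \<or> a \<in> C2" for a
    using that e1 e2 dual_anti[OF C0sub(1)] dual_anti[OF C0sub(2)] by blast
  have TsubD: "T a \<subseteq> dual C0" if "a \<in> dual C0" for a
    unfolding T_def using that inD C0sub dual_add by blast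
  have x1D: "x1 \<in> dual C0" using inD x1(1) by blast
  have y1D: "y1 \<in> dual C0" using inD y1(1) by blast
  have Deq: "dual C0 = ((C0 \<union> T x1) \<union> T y1) \<union> T (x1 + y1)"
  proof -
    have d01: "T 0 \<inter> T x1 = {}" by (rule Tdisj) (simp add: x1C0)
    have d2: "(C0 \<union> T x1) \<inter> T y1 = {}"
      using Tdisj[of 0 y1] Tdisj[of x1 y1] T0 y1(2) xyC0 by auto
    have d3: "((C0 \<union> T x1) \<union> T y1) \<inter> T (x1 + y1) = {}"
      using Tdisj[of 0 "x1 + y1"] Tdisj[of x1 "x1 + y1"] Tdisj[of y1 "x1 + y1"] T0 y1(2) xyC0 x1C0
      by (auto simp: add_cancel2 add_cancel3)
    have "card (((C0 \<union> T x1) \<union> T y1) \<union> T (x1 + y1)) = 4 * card C0"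
      using d01 d2 d3 T0 cT by (simp add: card_Un_disjoint)
    moreover have "((C0 \<union> T x1) \<union> T y1) \<union> T (x1 + y1) \<subseteq> dual C0"
      using TsubD[OF x1D] TsubD[OF y1D] TsubD[OF dual_add[OF x1D y1D]] inD C0sub by blast
    ultimately show ?thesis using card_subset_eq[OF fin] cD4 by metis
  qed
  have key: "c \<in> C1" if c: "c \<in> dual C0" "wt c mod 4 = 2" for c
  proof -
    have "c \<notin> C2" using c de by force
    then have n1: "c \<notin> C0 \<and> c \<notin> T y1" using C2eq by blast
    have n2: "c \<notin> T (x1 + y1)"
    proof
      assume "c \<in> T (x1 + y1)"
      then obtain w where w: "w \<in> C0" "c = x1 + (y1 + w)" unfolding T_def by (auto simp: add.assoc)
      define b where "b = y1 + w"
      have b: "b \<in> C2" using lc_add[OF l2 y1(1)] w C0sub b_def by blast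
      have "ip x1 b \<noteq> 0" using ipxy ipC0[OF x1(1) w(1)] by (simp add: b_def ip_add_right)
      then have "wt c mod 4 = (wt x1 + wt b + 2) mod 4" using wt_add_mod4[of x1 b] w b_def by simp
      also have "\<dots> = 0" using x1(2) de[OF b] by (rule mod4_aux)
      finally show False using c by simp
    qed
    have "c \<in> T x1" using n1 n2 c(1) Deq by blast
    then show ?thesis using lc_add[OF l1 x1(1)] C0sub unfolding T_def by blast
  qed
  have finW: "finite {wt x |x. x \<in> C1 \<and> x \<noteq> 0}"
  proof -
    have "{wt x |x. x \<in> C1 \<and> x \<noteq> 0} \<subseteq> wt ` (UNIV :: ('n \<Rightarrow> bit) set)" by auto
    then show ?thesis by (rule finite_subset) simp
  qed
  have dle: "d \<le> wt x" if "x \<in> C1" "x \<noteq> 0" for x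
    using assms(5) Min_le[OF finW] that unfolding min_dist_def by blast
  have one1: "(\<lambda>i. 1) \<in> C1" using ones_in[OF assms(2)] .
  have one2: "(\<lambda>i. 1) \<in> C2" using ones_in[OF assms(6)] .
  have n4: "n mod 4 = 0" using de[OF one2] wt_ones[where 'n='n] assms(1) by simp
  show ?thesis
  proof (intro ballI impI)
    fix c assume c: "c \<in> dual (C1 \<inter> C2)" "wt c mod 4 = 2"
    then have cC1: "c \<in> C1" using key unfolding C0_def by blast
    have "c \<noteq> 0" using c by (auto simp: wt_zero)
    then have g1: "d \<le> wt c" using dle cC1 by blast
    have "c \<noteq> (\<lambda>i. 1)" using c n4 wt_ones[where 'n='n] assms(1) by auto
    then have "c + (\<lambda>i. 1) \<noteq> 0"
      using char2_swap[of c "\<lambda>i. 1" 0 0] by auto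
    moreover have "c + (\<lambda>i. 1) \<in> C1" using lc_add[OF l1 cC1 one1] .
    ultimately have "d \<le> wt (c + (\<lambda>i. 1))" using dle by blast
    then have "d \<le> n - wt c" using wt_ones_add[of c] assms(1) by simp
    moreover have "wt c \<le> n" unfolding wt_def assms(1) by (rule card_mono) auto
    ultimately show "d \<le> wt c \<and> wt c \<le> n - d" using g1 by linarith
  qed
qed

end
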